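(* Let $n\geq 3$, $p,q>0$ with $pq>1$, $\alpha\in(0,n)$ and $\sigma_1,\sigma_2\in[0,\alpha)$, and let $u,v$ be bounded positive solutions of $$u(x)=\int_{\mathbb{R}^n}\frac{v(y)^q}{|x-y|^{n-\alpha}|y|^{\sigma_1}}\,dy,\qquad v(x)=\int_{\mathbb{R}^n}\frac{u(y)^p}{|x-y|^{n-\alpha}|y|^{\sigma_2}}\,dy,\qquad x\in\mathbb{R}^n.$$ Then: (i) For any $\theta_1<q_0$ and $\theta_2<p_0$, there does not exist a constant $c>0$ such that either $u(x)\geq c(1+|x|)^{-\theta_1}$ (for all $x$) or $v(x)\geq c(1+|x|)^{-\theta_2}$ (for all $x$). (ii) If $u,v$ are not integrable solutions, then for any $\theta_3>q_0$ and $\theta_4>p_0$ there does not exist a constant $C>0$ such that either $u(x)\leq C(1+|x|)^{-\theta_3}$ or $v(x)\leq C(1+|x|)^{-\theta_4}$. (iii) If $u,v$ are not integrable solutions but are decaying solutions, then $u(x)\simeq|x|^{-q_0}$ and $v(x)\simeq|x|^{-p_0}$ as $|x|\to\infty$.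
   Context: Define $$p_0=\frac{\alpha(1+p)-(\sigma_2+\sigma_1p)}{pq-1},\qquad q_0=\frac{\alpha(1+q)-(\sigma_1+\sigma_2q)}{pq-1},\qquad r_0=\frac{n}{q_0},\qquad s_0=\frac{n}{p_0}.$$ A positive solution $u,v$ is integrable if $u\in L^{r_0}(\mathbb{R}^n)$ and $v\in L^{s_0}(\mathbb{R}^n)$. The notation $f(x)\simeq g(x)$ means there exist constants $c,C>0$ with $cg(x)\leq f(x)\leq Cg(x)$ as $|x|\to\infty$. A positive solution is decaying if $u(x)\simeq|x|^{-\theta_1}$ and $v(x)\simeq|x|^{-\theta_2}$ for some $\theta_1,\theta_2>0$. *)

theory Defs
  imports "HOL-Analysis.Analysis"
begin

definition p0 :: "real \<Rightarrow> real \<Rightarrow> real \<Rightarrow> real \<Rightarrow> real \<Rightarrow> real" where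
  "p0 \<alpha> \<sigma>1 \<sigma>2 p q = (\<alpha> * (1 + p) - (\<sigma>2 + \<sigma>1 * p)) / (p * q - 1)"

definition q0 :: "real \<Rightarrow> real \<Rightarrow> real \<Rightarrow> real \<Rightarrow> real \<Rightarrow> real" where
  "q0 \<alpha> \<sigma>1 \<sigma>2 p q = (\<alpha> * (1 + q) - (\<sigma>1 + \<sigma>2 * q)) / (p * q - 1)"

definition is_solution ::
  "real \<Rightarrow> real \<Rightarrow> real \<Rightarrow> real \<Rightarrow> real \<Rightarrow> (real^'n \<Rightarrow> real) \<Rightarrow> (real^'n \<Rightarrow> real) \<Rightarrow> bool" where
  "is_solution \<alpha> \<sigma>1 \<sigma>2 p q u v \<longleftrightarrow>
     u \<in> borel_measurable lborel \<and> v \<in> borel_measurable lborel \<and>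
     (\<forall>x. ennreal (u x) = (\<integral>\<^sup>+ y. ennreal (v y powr q /
          (norm (x - y) powr (real CARD('n) - \<alpha>) * norm y powr \<sigma>1)) \<partial>lborel)) \<and>
     (\<forall>x. ennreal (v x) = (\<integral>\<^sup>+ y. ennreal (u y powr p /
          (norm (x - y) powr (real CARD('n) - \<alpha>) * norm y powr \<sigma>2)) \<partial>lborel))"

definition integrable_solution ::
  "real \<Rightarrow> real \<Rightarrow> real \<Rightarrow> real \<Rightarrow> real \<Rightarrow> (real^'n \<Rightarrow> real) \<Rightarrow> (real^'n \<Rightarrow> real) \<Rightarrow> bool" where
  "integrable_solution \<alpha> \<sigma>1 \<sigma>2 p q u v \<longleftrightarrow>
     (\<integral>\<^sup>+ x. ennreal (\<bar>u x\<bar> powr (real CARD('n) / q0 \<alpha> \<sigma>1 \<sigma>2 p q)) \<partial>lborel) < \<infinity> \<and>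
     (\<integral>\<^sup>+ x. ennreal (\<bar>v x\<bar> powr (real CARD('n) / p0 \<alpha> \<sigma>1 \<sigma>2 p q)) \<partial>lborel) < \<infinity>"

definition asymp_comparable :: "('a::real_normed_vector \<Rightarrow> real) \<Rightarrow> ('a \<Rightarrow> real) \<Rightarrow> bool" where
  "asymp_comparable f g \<longleftrightarrow> (\<exists>c>0. \<exists>C>0. \<forall>\<^sub>F x in at_infinity. c * g x \<le> f x \<and> f x \<le> C * g x)"

definition decaying_solution :: "('a::real_normed_vector \<Rightarrow> real) \<Rightarrow> ('a \<Rightarrow> real) \<Rightarrow> bool" where
  "decaying_solution u v \<longleftrightarrow> (\<exists>\<theta>1>0. \<exists>\<theta>2>0.
     asymp_comparable u (\<lambda>x. norm x powr (-\<theta>1)) \<and> asymp_comparable v (\<lambda>x. norm x powr (-\<theta>2)))"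

end

theory Submission
  imports Defs
begin


lemma ennreal_term_le_suminf: "(f k :: ennreal) \<le> (\<Sum>i. f i)"
  using sum_le_suminf[of f "{k}"] by (simp add: summableI)

lemma pw_shell:
  fixes s r b :: real
  assumes "0 < r" "r/2 \<le> s" "s \<le> r"
  shows "s powr (-b) \<le> 2 powr \<bar>b\<bar> * r powr (-b)"
proof (cases "b \<ge> 0")
  case True
  have "s powr (-b) \<le> (r/2) powr (-b)"
    using assms True by (intro powr_mono2') auto
  also have "\<dots> = 2 powr b * r powr (-b)"
    using assms by (simp add: powr_divide powr_minus divide_simps)
  finally show ?thesis using True by simp
next
  case False
  have "s powr (-b) \<le> r powr (-b)"
    using assms False by (intro powr_mono2) auto
  also have "\<dots> \<le> 2 powr \<bar>b\<bar> * r powr (-b)"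
    by (simp add: mult_le_cancel_right1 ge_one_powr_ge_zero)
  finally show ?thesis .
qed

lemma shell_bound:
  fixes c :: "real^'n" and f :: "real^'n \<Rightarrow> real"
  assumes "0 < r" "0 \<le> M" "\<And>y. r/2 \<le> norm (y-c) \<Longrightarrow> norm (y-c) < r \<Longrightarrow> f y \<le> M"
  shows "(\<integral>\<^sup>+y. indicator {y. r/2 \<le> norm (y-c) \<and> norm (y-c) < r} y * ennreal (f y) \<partial>lborel)
     \<le> ennreal (M * (unit_ball_vol (CARD('n)) * r ^ CARD('n)))"
proof -
  have "(\<integral>\<^sup>+y. indicator {y. r/2 \<le> norm (y-c) \<and> norm (y-c) < r} y * ennreal (f y) \<partial>lborel)
      \<le> (\<integral>\<^sup>+y. ennreal M * indicator (ball c r) y \<partial>lborel)"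
    apply (rule nn_integral_mono)
    using assms by (auto simp: indicator_def dist_norm norm_minus_commute)
  also have "\<dots> = ennreal M * emeasure lborel (ball c r)"
    by (rule nn_integral_cmult_indicator) auto
  also have "\<dots> = ennreal (M * (unit_ball_vol (CARD('n)) * r ^ CARD('n)))"
    using emeasure_ball[of r c] assms by (simp add: ennreal_mult)
  finally show ?thesis .
qed

lemma dyadic_pow:
  fixes R a :: real and k :: nat
  assumes "R > 0"
  shows "(R / 2^k) powr a = R powr a * (2 powr (-a)) ^ k"
proof -
  have h1: "((2::real)^k) powr a = (2 powr a) ^ k"
  proof -
    have "(2::real)^k = 2 powr (real k)" by (simp add: powr_realpow)
    then have "((2::real)^k) powr a = (2 powr a) powr (real k)"
      by (simp add: powr_powr mult.commute)
    also have "\<dots> = (2 powr a) ^ k" by (simp add: powr_realpow)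
    finally show ?thesis .
  qed
  have "(R / 2^k) powr a = R powr a / (2^k) powr a" using assms by (simp add: powr_divide)
  also have "\<dots> = R powr a / (2 powr a) ^ k" using h1 by simp
  finally show ?thesis by (simp add: powr_minus divide_simps power_inverse)
qed

lemma dyadic_term:
  fixes c :: "real^'n" and r b :: real
  assumes r0: "r > 0"
  shows "(\<integral>\<^sup>+y. indicator {y. r/2 \<le> norm (y-c) \<and> norm (y-c) < r} y * ennreal (norm (y-c) powr (-b)) \<partial>lborel)
     \<le> ennreal (2 powr \<bar>b\<bar> * unit_ball_vol (real CARD('n)) * r powr (real CARD('n) - b))"
proof -
  have M0: "0 \<le> 2 powr \<bar>b\<bar> * r powr (-b)" by (intro mult_nonneg_nonneg) auto
  have B: "\<And>y. r/2 \<le> norm (y-c) \<Longrightarrow> norm (y-c) < r \<Longrightarrow> norm (y-c) powr (-b) \<le> 2 powr \<bar>b\<bar> * r powr (-b)"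
    by (rule pw_shell) (use r0 in auto)
  have "(\<integral>\<^sup>+y. indicator {y. r/2 \<le> norm (y-c) \<and> norm (y-c) < r} y * ennreal (norm (y-c) powr (-b)) \<partial>lborel)
     \<le> ennreal ((2 powr \<bar>b\<bar> * r powr (-b)) * (unit_ball_vol (CARD('n)) * r ^ CARD('n)))"
    by (rule shell_bound[where f="\<lambda>y. norm (y-c) powr (-b)" and c=c, OF r0 M0 B])
  also have "(2 powr \<bar>b\<bar> * r powr (-b)) * (unit_ball_vol (CARD('n)) * r ^ CARD('n))
          = 2 powr \<bar>b\<bar> * unit_ball_vol (real CARD('n)) * r powr (real CARD('n) - b)"
  proof -
    have e1: "r ^ CARD('n) = r powr (real CARD('n))" using r0 by (simp add: powr_realpow)
    have e2: "r powr (real CARD('n) - b) = r powr (-b) * r powr (real CARD('n))"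
      by (simp add: powr_add[symmetric])
    show ?thesis unfolding e1 e2 by (simp only: mult_ac)
  qed
  finally show ?thesis .
qed

lemma geom_ennreal:
  fixes A q :: real
  assumes "0 \<le> A" "0 \<le> q" "q < 1"
  shows "(\<Sum>k. ennreal (A * q^k)) = ennreal (A / (1 - q))"
proof -
  have s: "summable (\<lambda>k. A * q^k)" using assms by (intro summable_mult summable_geometric) auto
  have "(\<Sum>k. ennreal (A * q^k)) = ennreal (\<Sum>k. A * q^k)"
    using s assms by (intro suminf_ennreal2) auto
  also have "(\<Sum>k. A * q^k) = A / (1 - q)"
    using assms by (simp add: suminf_mult suminf_geometric)
  finally show ?thesis .
qed

lemma D_in:
  fixes b :: real
  assumes "b < real CARD('n)"
  shows "\<exists>K\<ge>0. \<forall>(c::real^'n) R. R>0 \<longrightarrow> (\<integral>\<^sup>+y. indicator (ball c R) y * ennreal (norm (y-c) powr (-b)) \<partial>lborel)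
            \<le> ennreal (K * R powr (real CARD('n) - b))"
proof -
  define N where "N = real CARD('n)"
  define \<omega> where "\<omega> = unit_ball_vol N"
  define q where "q = 2 powr (b - N)"
  have q0: "0 < q" by (simp add: q_def)
  have "q < 2 powr 0" unfolding q_def using assms by (intro powr_less_mono) (auto simp: N_def)
  then have q1: "q < 1" by simp
  have \<omega>0: "0 \<le> \<omega>" by (simp add: \<omega>_def N_def)
  define K where "K = 2 powr \<bar>b\<bar> * \<omega> / (1 - q)"
  have K0: "K \<ge> 0" using \<omega>0 q1 by (simp add: K_def)
  show ?thesis
  proof (intro exI[of _ K] conjI allI impI K0)
    fix c :: "real^'n" and R :: real assume R: "R > 0"
    define S where "S k = {y. (R/2^k)/2 \<le> norm (y-c) \<and> norm (y-c) < R/2^k}" for k :: nat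
    define F where "F y = ennreal (norm (y-c) powr (-b))" for y
    have pw: "indicator (ball c R) y * F y \<le> (\<Sum>k. indicator (S k) y * F y)" for y
    proof (cases "y \<in> ball c R \<and> y \<noteq> c")
      case False
      then show ?thesis by (auto simp: F_def indicator_def)
    next
      case True
      define s where "s = norm (y - c)"
      have s0: "0 < s" and sR: "s < R" using True by (auto simp: s_def dist_norm norm_minus_commute)
      obtain k0 where k0: "(1/2::real)^k0 < s / R"
        using real_arch_pow_inv[of "s/R" "1/2"] s0 R by auto
      have "\<exists>k. R / 2^k \<le> s"
      proof
        show "R / 2^k0 \<le> s" using k0 R by (simp add: field_simps power_divide)
      qed
      then obtain m where m1: "\<not> R/2^m \<le> s" and m2: "R/2^(Suc m) \<le> s"
        using exists_least_lemma[of "\<lambda>k. R / 2^k \<le> s"] sR by auto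
      have "y \<in> S m" using m1 m2 by (auto simp: S_def s_def)
      then have "indicator (ball c R) y * F y = indicator (S m) y * F y"
        using True by simp
      also have "\<dots> \<le> (\<Sum>k. indicator (S k) y * F y)" by (rule ennreal_term_le_suminf)
      finally show ?thesis .
    qed
    have meas: "(\<lambda>y. indicator (S k) y * F y) \<in> borel_measurable lborel" for k
      unfolding S_def F_def by measurable
    have tk: "(\<integral>\<^sup>+y. indicator (S k) y * F y \<partial>lborel) \<le> ennreal (2 powr \<bar>b\<bar> * \<omega> * R powr (N - b) * q^k)" for k
    proof -
      have r0: "R / 2^k > 0" using R by simp
      have "(\<integral>\<^sup>+y. indicator (S k) y * F y \<partial>lborel) \<le> ennreal (2 powr \<bar>b\<bar> * \<omega> * (R/2^k) powr (N - b))"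
        unfolding S_def F_def \<omega>_def N_def by (rule dyadic_term[OF r0])
      also have "2 powr \<bar>b\<bar> * \<omega> * (R/2^k) powr (N - b) = 2 powr \<bar>b\<bar> * \<omega> * R powr (N - b) * q^k"
        unfolding q_def using dyadic_pow[where R=R and a="N - b" and k=k] R by simp
      finally show ?thesis .
    qed
    have "(\<integral>\<^sup>+y. indicator (ball c R) y * F y \<partial>lborel) \<le> (\<integral>\<^sup>+y. (\<Sum>k. indicator (S k) y * F y) \<partial>lborel)"
      by (rule nn_integral_mono) (rule pw)
    also have "\<dots> = (\<Sum>k. \<integral>\<^sup>+y. indicator (S k) y * F y \<partial>lborel)"
      by (rule nn_integral_suminf) (use meas in auto)
    also have "\<dots> \<le> (\<Sum>k. ennreal (2 powr \<bar>b\<bar> * \<omega> * R powr (N - b) * q^k))"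
      by (intro suminf_le tk) auto
    also have "\<dots> = ennreal (2 powr \<bar>b\<bar> * \<omega> * R powr (N - b) / (1 - q))"
      by (rule geom_ennreal) (use q0 q1 \<omega>0 in auto)
    also have "\<dots> = ennreal (K * R powr (real CARD('n) - b))"
      using q1 by (simp add: K_def N_def field_simps)
    finally show "(\<integral>\<^sup>+y. indicator (ball c R) y * ennreal (norm (y-c) powr (-b)) \<partial>lborel)
            \<le> ennreal (K * R powr (real CARD('n) - b))" by (simp only: F_def)
  qed
qed

lemma dyadic_pow_up:
  fixes R a :: real and k :: nat
  assumes "R > 0"
  shows "(R * 2^k) powr a = R powr a * (2 powr a) ^ k"
proof -
  have h1: "((2::real)^k) powr a = (2 powr a) ^ k"
  proof -
    have "(2::real)^k = 2 powr (real k)" by (simp add: powr_realpow)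
    then have "((2::real)^k) powr a = (2 powr a) powr (real k)"
      by (simp add: powr_powr mult.commute)
    also have "\<dots> = (2 powr a) ^ k" by (simp add: powr_realpow)
    finally show ?thesis .
  qed
  have "(R * 2^k) powr a = R powr a * (2^k) powr a" using assms by (simp add: powr_mult)
  also have "\<dots> = R powr a * (2 powr a) ^ k" using h1 by simp
  finally show ?thesis .
qed

lemma D_out:
  fixes c :: "real^'n" and b :: real
  assumes "b > real CARD('n)"
  shows "\<exists>K\<ge>0. \<forall>R>0. (\<integral>\<^sup>+y. indicator (- ball c R) y * ennreal (norm (y-c) powr (-b)) \<partial>lborel)
            \<le> ennreal (K * R powr (real CARD('n) - b))"
proof -
  define N where "N = real CARD('n)"
  define \<omega> where "\<omega> = unit_ball_vol N"
  define q where "q = 2 powr (N - b)"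
  have q0: "0 < q" by (simp add: q_def)
  have "q < 2 powr 0" unfolding q_def using assms by (intro powr_less_mono) (auto simp: N_def)
  then have q1: "q < 1" by simp
  have \<omega>0: "0 \<le> \<omega>" by (simp add: \<omega>_def N_def)
  define K where "K = 2 powr \<bar>b\<bar> * \<omega> * 2 powr (N - b) / (1 - q)"
  have K0: "K \<ge> 0" using \<omega>0 q1 by (simp add: K_def)
  show ?thesis
  proof (intro exI[of _ K] conjI allI impI K0)
    fix R :: real assume R: "R > 0"
    define S where "S k = {y. (R*2^Suc k)/2 \<le> norm (y-c) \<and> norm (y-c) < R*2^Suc k}" for k :: nat
    define F where "F y = ennreal (norm (y-c) powr (-b))" for y
    have pw: "indicator (- ball c R) y * F y \<le> (\<Sum>k. indicator (S k) y * F y)" for y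
    proof (cases "y \<in> ball c R")
      case True
      then show ?thesis by (auto simp: F_def indicator_def)
    next
      case False
      define s where "s = norm (y - c)"
      have sR: "R \<le> s" using False by (auto simp: s_def dist_norm norm_minus_commute)
      obtain k0 where k0: "s / R < 2^k0"
        using real_arch_pow[of 2 "s/R"] by auto
      have "\<exists>k. s < R * 2^k"
      proof
        show "s < R * 2^k0" using k0 R by (simp add: field_simps)
      qed
      then obtain m where m1: "\<not> s < R * 2^m" and m2: "s < R*2^(Suc m)"
        using exists_least_lemma[of "\<lambda>k. s < R * 2^k"] sR by auto
      have "y \<in> S m" using m1 m2 by (auto simp: S_def s_def)
      then have "indicator (- ball c R) y * F y = indicator (S m) y * F y"
        using False by simp
      also have "\<dots> \<le> (\<Sum>k. indicator (S k) y * F y)" by (rule ennreal_term_le_suminf)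
      finally show ?thesis .
    qed
    have meas: "(\<lambda>y. indicator (S k) y * F y) \<in> borel_measurable lborel" for k
      unfolding S_def F_def by measurable
    have tk: "(\<integral>\<^sup>+y. indicator (S k) y * F y \<partial>lborel) \<le> ennreal (2 powr \<bar>b\<bar> * \<omega> * 2 powr (N - b) * R powr (N - b) * q^k)" for k
    proof -
      have r0: "R * 2^Suc k > 0" using R by simp
      have "(\<integral>\<^sup>+y. indicator (S k) y * F y \<partial>lborel) \<le> ennreal (2 powr \<bar>b\<bar> * \<omega> * (R * 2^Suc k) powr (N - b))"
        unfolding S_def F_def \<omega>_def N_def by (rule dyadic_term[OF r0])
      also have "2 powr \<bar>b\<bar> * \<omega> * (R * 2^Suc k) powr (N - b) = 2 powr \<bar>b\<bar> * \<omega> * 2 powr (N - b) * R powr (N - b) * q^k"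
        unfolding q_def using dyadic_pow_up[where R=R and a="N - b" and k="Suc k"] R by simp
      finally show ?thesis .
    qed
    have "(\<integral>\<^sup>+y. indicator (- ball c R) y * F y \<partial>lborel) \<le> (\<integral>\<^sup>+y. (\<Sum>k. indicator (S k) y * F y) \<partial>lborel)"
      by (rule nn_integral_mono) (rule pw)
    also have "\<dots> = (\<Sum>k. \<integral>\<^sup>+y. indicator (S k) y * F y \<partial>lborel)"
      by (rule nn_integral_suminf) (use meas in auto)
    also have "\<dots> \<le> (\<Sum>k. ennreal (2 powr \<bar>b\<bar> * \<omega> * 2 powr (N - b) * R powr (N - b) * q^k))"
      by (intro suminf_le tk) auto
    also have "\<dots> = ennreal (2 powr \<bar>b\<bar> * \<omega> * 2 powr (N - b) * R powr (N - b) / (1 - q))"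
      by (rule geom_ennreal) (use q0 q1 \<omega>0 in auto)
    also have "\<dots> = ennreal (K * R powr (real CARD('n) - b))"
      using q1 by (simp add: K_def N_def field_simps)
    finally show "(\<integral>\<^sup>+y. indicator (- ball c R) y * ennreal (norm (y-c) powr (-b)) \<partial>lborel)
            \<le> ennreal (K * R powr (real CARD('n) - b))" by (simp only: F_def)
  qed
qed

definition Pot :: "real \<Rightarrow> real \<Rightarrow> (real^'n \<Rightarrow> real) \<Rightarrow> real^'n \<Rightarrow> ennreal" where
  "Pot \<alpha> \<sigma> g x = (\<integral>\<^sup>+ y. ennreal (g y / (norm (x - y) powr (real CARD('n) - \<alpha>) * norm y powr \<sigma>)) \<partial>lborel)"

lemma pot_lower:
  fixes g :: "real^'n \<Rightarrow> real"
  assumes "\<alpha> < real CARD('n)" "0 \<le> \<sigma>" "c > 0" "R > 0" "b \<ge> 0"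
    and gb: "\<And>y. norm y \<ge> R \<Longrightarrow> g y \<ge> c * norm y powr (-b)"
  shows "\<exists>c'>0. \<forall>x. norm x \<ge> 2*R \<longrightarrow> Pot \<alpha> \<sigma> g x \<ge> ennreal (c' * norm x powr (-(b+\<sigma>-\<alpha>)))"
proof -
  define N where "N = real CARD('n)"
  define \<beta> where "\<beta> = N - \<alpha>"
  have \<beta>0: "\<beta> > 0" using assms by (simp add: \<beta>_def N_def)
  define \<omega> where "\<omega> = unit_ball_vol N"
  have \<omega>0: "\<omega> > 0" by (simp add: \<omega>_def N_def)
  define c' where "c' = c * \<omega> * (3/2) powr (-(b+\<sigma>)) * (1/2) powr \<alpha>"
  have c'0: "c' > 0" using assms \<omega>0 by (simp add: c'_def)
  show ?thesis
  proof (intro exI[of _ c'] conjI allI impI c'0)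
    fix x :: "real^'n" assume x: "norm x \<ge> 2*R"
    define t where "t = norm x"
    have t0: "t > 0" unfolding t_def using x \<open>R > 0\<close> by linarith
    define \<rho> where "\<rho> = t/2"
    define T where "T = 3*t/2"
    have \<rho>0: "\<rho> > 0" and T0: "T > 0" using t0 by (auto simp: \<rho>_def T_def)
    define m where "m = c * T powr (-b) / (\<rho> powr \<beta> * T powr \<sigma>)"
    have m0: "m \<ge> 0" using assms by (simp add: m_def)
    have ptw: "m \<le> g y / (norm (x - y) powr \<beta> * norm y powr \<sigma>)" if y: "y \<in> ball x \<rho>" "y \<noteq> x" for y
    proof -
      have d1: "norm (x - y) < \<rho>" "norm (x-y) > 0" using y by (auto simp: dist_norm)
      have ny1: "norm y \<ge> t/2" using d1 norm_triangle_ineq2[of x y] by (simp add: t_def \<rho>_def)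
      have ny2: "norm y \<le> T" using d1 norm_triangle_ineq4[of x y] norm_triangle_ineq2[of y x]
        by (simp add: T_def t_def \<rho>_def norm_minus_commute)
      have nyR: "norm y \<ge> R" using ny1 x by (simp add: t_def)
      have ny0: "norm y > 0" using nyR \<open>R > 0\<close> by linarith
      have A: "c * T powr (-b) \<le> g y"
      proof -
        have "T powr (-b) \<le> norm y powr (-b)" using ny0 ny2 assms by (intro powr_mono2') auto
        then have "c * T powr (-b) \<le> c * norm y powr (-b)" using assms by simp
        also have "\<dots> \<le> g y" using gb[OF nyR] .
        finally show ?thesis .
      qed
      have B: "norm (x - y) powr \<beta> * norm y powr \<sigma> \<le> \<rho> powr \<beta> * T powr \<sigma>"
        using d1 ny0 ny2 \<beta>0 assms by (intro mult_mono powr_mono2) auto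
      have C: "0 < norm (x - y) powr \<beta> * norm y powr \<sigma>" using d1 ny0 by simp
      show ?thesis unfolding m_def
      proof (rule frac_le)
        have "0 \<le> c * T powr (-b)" using assms by simp
        then show "0 \<le> g y" using A by linarith
      qed (use A B C in auto)
    qed
    have "ennreal (m * (\<omega> * \<rho> ^ CARD('n))) = ennreal m * emeasure lborel (ball x \<rho>)"
      using emeasure_ball[of \<rho> x] \<rho>0 m0 \<omega>0 by (simp add: ennreal_mult \<omega>_def N_def)
    also have "\<dots> = (\<integral>\<^sup>+y. ennreal m * indicator (ball x \<rho>) y \<partial>lborel)"
      by (rule nn_integral_cmult_indicator[symmetric]) auto
    also have "\<dots> \<le> Pot \<alpha> \<sigma> g x"
      unfolding Pot_def
    proof (rule nn_integral_mono_AE)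
      show "AE y in lborel. ennreal m * indicator (ball x \<rho>) y
          \<le> ennreal (g y / (norm (x - y) powr (real CARD('n) - \<alpha>) * norm y powr \<sigma>))"
        using AE_lborel_singleton[of x]
      proof (rule AE_mp, intro AE_I2 impI)
        fix y :: "real^'n" assume "y \<noteq> x"
        then show "ennreal m * indicator (ball x \<rho>) y
          \<le> ennreal (g y / (norm (x - y) powr (real CARD('n) - \<alpha>) * norm y powr \<sigma>))"
          using ptw[of y] by (auto simp: indicator_def \<beta>_def N_def intro: ennreal_leI)
      qed
    qed
    finally have I: "ennreal (m * (\<omega> * \<rho> ^ CARD('n))) \<le> Pot \<alpha> \<sigma> g x" .
    have "m * (\<omega> * \<rho> ^ CARD('n)) = c' * t powr (-(b+\<sigma>-\<alpha>))"
    proof -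
      have e1: "\<rho> ^ CARD('n) = \<rho> powr N" using \<rho>0 by (simp add: N_def powr_realpow)
      have e2: "\<rho> powr N = \<rho> powr \<beta> * \<rho> powr \<alpha>" by (simp add: \<beta>_def powr_add[symmetric])
      have e3: "T powr (-b) = T powr (-(b+\<sigma>)) * T powr \<sigma>" by (simp add: powr_add[symmetric])
      have e4: "T powr (-(b+\<sigma>)) = (3/2) powr (-(b+\<sigma>)) * t powr (-(b+\<sigma>))"
        unfolding T_def using t0 by (simp add: powr_mult[symmetric])
      have e5: "\<rho> powr \<alpha> = (1/2) powr \<alpha> * t powr \<alpha>"
        unfolding \<rho>_def using t0 by (simp add: powr_mult[symmetric])
      have e6: "t powr (-(b+\<sigma>-\<alpha>)) = t powr (-(b+\<sigma>)) * t powr \<alpha>"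
        by (simp add: powr_add[symmetric] algebra_simps)
      have nz: "\<rho> powr \<beta> * T powr \<sigma> \<noteq> 0" using \<rho>0 T0 by simp
      show ?thesis unfolding m_def e1 e2 e3 e6 e4 e5 c'_def using nz
        by (simp add: field_simps)
    qed
    then show "Pot \<alpha> \<sigma> g x \<ge> ennreal (c' * norm x powr (-(b+\<sigma>-\<alpha>)))" using I by (simp add: t_def)
  qed
qed

lemma ennreal_le_pos: "ennreal a \<le> ennreal b \<Longrightarrow> 0 < a \<Longrightarrow> a \<le> b"
  by (cases "b \<ge> 0") (auto simp: ennreal_le_iff ennreal_neg)

lemma unbounded_contra:
  fixes f :: "real^'n \<Rightarrow> real"
  assumes "bounded (range f)" "c > 0" "e < 0"
    and lb: "\<And>x. norm x \<ge> R \<Longrightarrow> f x \<ge> c * norm x powr (-e)"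
  shows False
proof -
  obtain M where M: "\<And>x. norm (f x) \<le> M" using assms(1) unfolding bounded_iff by auto
  define r where "r = max (max R 1) ((\<bar>M\<bar>/c + 1) powr (1/(-e)))"
  have r1: "r \<ge> 1" and rR: "r \<ge> R" by (auto simp: r_def)
  have "r powr (-e) \<ge> ((\<bar>M\<bar>/c + 1) powr (1/(-e))) powr (-e)"
    using assms by (intro powr_mono2) (auto simp: r_def)
  also have "((\<bar>M\<bar>/c + 1) powr (1/(-e))) powr (-e) = \<bar>M\<bar>/c + 1"
    using assms by (simp add: powr_powr)
  finally have rp: "r powr (-e) \<ge> \<bar>M\<bar>/c + 1" .
  obtain x :: "real^'n" where x: "norm x = r" using vector_choose_size[of r] r1 by auto
  have "f x \<ge> c * r powr (-e)" using lb[of x] x rR by simp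
  moreover have "c * r powr (-e) \<ge> c * (\<bar>M\<bar>/c + 1)" using rp assms by simp
  moreover have "c * (\<bar>M\<bar>/c + 1) = \<bar>M\<bar> + c" using assms by (simp add: field_simps)
  moreover have "f x \<le> \<bar>M\<bar>" using M[of x] by simp
  ultimately show False using assms by linarith
qed

lemma transfer:
  fixes f g :: "real^'n \<Rightarrow> real"
  assumes "\<alpha> < real CARD('n)" "0 \<le> \<sigma>" "p > 0" "c > 0" "e \<ge> 0"
    and lb: "\<And>x. norm x \<ge> R \<Longrightarrow> f x \<ge> c * norm x powr (-e)"
    and sol: "\<And>x. ennreal (g x) = Pot \<alpha> \<sigma> (\<lambda>y. f y powr p) x"
  shows "\<exists>c'>0. \<exists>R'. \<forall>x. norm x \<ge> R' \<longrightarrow> g x \<ge> c' * norm x powr (-(p*e+\<sigma>-\<alpha>))"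
proof -
  define R0 where "R0 = max R 1"
  have R0: "R0 > 0" by (simp add: R0_def)
  have fb: "f y powr p \<ge> c powr p * norm y powr (-(p*e))" if "norm y \<ge> R0" for y
  proof -
    have ny: "norm y > 0" using that R0 by linarith
    have "(c * norm y powr (-e)) powr p \<le> f y powr p"
      using lb[of y] that assms by (intro powr_mono2) (auto simp: R0_def)
    also have "(c * norm y powr (-e)) powr p = c powr p * norm y powr (-(p*e))"
      using assms ny by (simp add: powr_mult powr_powr mult.commute)
    finally show ?thesis by simp
  qed
  obtain c' where c': "c' > 0" and
    cl: "\<And>x. norm x \<ge> 2*R0 \<Longrightarrow> Pot \<alpha> \<sigma> (\<lambda>y. f y powr p) x \<ge> ennreal (c' * norm x powr (-(p*e+\<sigma>-\<alpha>)))"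
    using pot_lower[of \<alpha> \<sigma> "c powr p" R0 "p*e" "\<lambda>y. f y powr p"] assms R0 fb by auto
  show ?thesis
  proof (rule exI[of _ c'], intro conjI exI[of _ "2*R0"] allI impI c')
    fix x :: "real^'n" assume x: "norm x \<ge> 2*R0"
    have "norm x > 0" using x R0 by linarith
    then have pos: "c' * norm x powr (-(p*e+\<sigma>-\<alpha>)) > 0" using c' by simp
    show "g x \<ge> c' * norm x powr (-(p*e+\<sigma>-\<alpha>))"
      using cl[OF x] sol[of x] pos by (intro ennreal_le_pos) auto
  qed
qed

lemma q0_fix:
  assumes "p * q > 1"
  shows "q0 \<alpha> \<sigma>1 \<sigma>2 p q * (p*q - 1) = \<alpha>*(1+q) - (\<sigma>1 + \<sigma>2*q)"
  using assms by (simp add: q0_def)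

lemma q0_pos:
  assumes "p > 0" "q > 0" "p * q > 1" "\<sigma>1 < \<alpha>" "\<sigma>2 < \<alpha>"
  shows "q0 \<alpha> \<sigma>1 \<sigma>2 p q > 0"
proof -
  have "\<alpha>*(1+q) - (\<sigma>1 + \<sigma>2*q) = (\<alpha> - \<sigma>1) + q*(\<alpha> - \<sigma>2)" by (simp add: algebra_simps)
  also have "\<dots> > 0" using assms by (intro add_pos_nonneg) auto
  finally show ?thesis using assms by (simp add: q0_def)
qed

lemma core:
  fixes u v :: "real^'n \<Rightarrow> real"
  assumes "p > 0" "q > 0" "p * q > 1" "0 < \<alpha>" "\<alpha> < real CARD('n)"
    "0 \<le> \<sigma>1" "\<sigma>1 < \<alpha>" "0 \<le> \<sigma>2" "\<sigma>2 < \<alpha>"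
    and bu: "bounded (range u)" and bv: "bounded (range v)"
    and solu: "\<And>x. ennreal (u x) = Pot \<alpha> \<sigma>1 (\<lambda>y. v y powr q) x"
    and solv: "\<And>x. ennreal (v x) = Pot \<alpha> \<sigma>2 (\<lambda>y. u y powr p) x"
    and c: "c > 0" and lb: "\<And>x. norm x \<ge> R \<Longrightarrow> u x \<ge> c * norm x powr (-\<theta>)"
    and th: "\<theta> < q0 \<alpha> \<sigma>1 \<sigma>2 p q"
  shows False
proof -
  define Q where "Q = q0 \<alpha> \<sigma>1 \<sigma>2 p q"
  define d where "d = Q - \<theta>"
  have d0: "d > 0" using th by (simp add: d_def Q_def)
  have Qfix: "Q * (p*q - 1) = \<alpha>*(1+q) - (\<sigma>1 + \<sigma>2*q)" using q0_fix[OF assms(3)] by (simp add: Q_def)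
  define e where "e k = Q - (p*q)^k * d" for k :: nat
  have claim: "\<exists>c>0. \<exists>R. \<forall>x. norm x \<ge> R \<longrightarrow> u x \<ge> c * norm x powr (-(e k))" for k
  proof (induction k)
    case 0
    show ?case using c lb by (auto simp: e_def d_def)
  next
    case (Suc k)
    then obtain c1 R1 where c1: "c1 > 0" and l1: "\<And>x. norm x \<ge> R1 \<Longrightarrow> u x \<ge> c1 * norm x powr (-(e k))"
      by auto
    show ?case
    proof (cases "e k < 0")
      case True
      then show ?thesis using unbounded_contra[OF bu c1 True, of R1] l1 by blast
    next
      case False
      then obtain c2 R2 where c2: "c2 > 0" and
        l2: "\<And>x. norm x \<ge> R2 \<Longrightarrow> v x \<ge> c2 * norm x powr (-(p * e k + \<sigma>2 - \<alpha>))"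
        using transfer[of \<alpha> \<sigma>2 p c1 "e k" R1 u v] assms c1 l1 solv by auto
      show ?thesis
      proof (cases "p * e k + \<sigma>2 - \<alpha> < 0")
        case True
        then show ?thesis using unbounded_contra[OF bv c2 True, of R2] l2 by blast
      next
        case False
        then obtain c3 R3 where c3: "c3 > 0" and
          l3: "\<And>x. norm x \<ge> R3 \<Longrightarrow> u x \<ge> c3 * norm x powr (-(q * (p * e k + \<sigma>2 - \<alpha>) + \<sigma>1 - \<alpha>))"
          using transfer[of \<alpha> \<sigma>1 q c2 "p * e k + \<sigma>2 - \<alpha>" R2 v u] assms c2 l2 solu by auto
        have "q * (p * e k + \<sigma>2 - \<alpha>) + \<sigma>1 - \<alpha> = e (Suc k)"
        proof -
          have "q * (p * e k + \<sigma>2 - \<alpha>) + \<sigma>1 - \<alpha> = Q * (p*q) - (p*q)^(Suc k) * d + q*\<sigma>2 - q*\<alpha> + \<sigma>1 - \<alpha>"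
            by (simp add: e_def algebra_simps)
          also have "\<dots> = e (Suc k)" using Qfix by (simp add: e_def algebra_simps)
          finally show ?thesis .
        qed
        then show ?thesis using c3 l3 by auto
      qed
    qed
  qed
  obtain k where k: "Q / d < (p*q)^k" using real_arch_pow[of "p*q" "Q/d"] assms by auto
  have "e k < 0" using k d0 by (simp add: e_def field_simps)
  moreover obtain c1 R1 where "c1 > 0" "\<And>x. norm x \<ge> R1 \<Longrightarrow> u x \<ge> c1 * norm x powr (-(e k))"
    using claim[of k] by auto
  ultimately show False using unbounded_contra[OF bu] by blast
qed

lemma one_plus_powr_lower:
  fixes t \<theta> :: real
  assumes "t \<ge> 1"
  shows "(1+t) powr (-\<theta>) \<ge> 2 powr (-max \<theta> 0) * t powr (-max \<theta> 0)"
proof (cases "\<theta> \<ge> 0")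
  case True
  have "(2*t) powr (-\<theta>) \<le> (1+t) powr (-\<theta>)"
    using assms True by (intro powr_mono2') auto
  moreover have "(2*t) powr (-\<theta>) = 2 powr (-\<theta>) * t powr (-\<theta>)"
    using assms by (simp add: powr_mult)
  ultimately show ?thesis using True by simp
next
  case False
  have "1 \<le> (1+t) powr (-\<theta>)" using assms False by (intro ge_one_powr_ge_zero) auto
  then show ?thesis using False assms by simp
qed

lemma part_i_u:
  fixes u v :: "real^'n \<Rightarrow> real"
  assumes "p > 0" "q > 0" "p * q > 1" "0 < \<alpha>" "\<alpha> < real CARD('n)"
    "0 \<le> \<sigma>1" "\<sigma>1 < \<alpha>" "0 \<le> \<sigma>2" "\<sigma>2 < \<alpha>"
    and bu: "bounded (range u)" and bv: "bounded (range v)"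
    and solu: "\<And>x. ennreal (u x) = Pot \<alpha> \<sigma>1 (\<lambda>y. v y powr q) x"
    and solv: "\<And>x. ennreal (v x) = Pot \<alpha> \<sigma>2 (\<lambda>y. u y powr p) x"
    and th: "\<theta>1 < q0 \<alpha> \<sigma>1 \<sigma>2 p q"
    and c: "c > 0" and lb: "\<And>x. u x \<ge> c * (1 + norm x) powr (-\<theta>1)"
  shows False
proof -
  define \<theta> where "\<theta> = max \<theta>1 0"
  have Q: "q0 \<alpha> \<sigma>1 \<sigma>2 p q > 0" using q0_pos assms by blast
  have th': "\<theta> < q0 \<alpha> \<sigma>1 \<sigma>2 p q" using th Q by (simp add: \<theta>_def)
  have lb': "u x \<ge> (c * 2 powr (-\<theta>)) * norm x powr (-\<theta>)" if "norm x \<ge> 1" for x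
  proof -
    have "c * (2 powr (-\<theta>) * norm x powr (-\<theta>)) \<le> c * (1 + norm x) powr (-\<theta>1)"
      using one_plus_powr_lower[OF that, of \<theta>1] c by (simp add: \<theta>_def)
    then show ?thesis using lb[of x] by (simp add: mult.assoc)
  qed
  show False
    by (rule core[OF assms(1-9) bu bv solu solv _ lb' th']) (use c in simp)
qed

lemma decay_contra:
  fixes f :: "real^'n \<Rightarrow> real"
  assumes "c > 0" "C > 0" "e1 < e2"
    and h: "\<And>x. norm x \<ge> R \<Longrightarrow> c * norm x powr (-e1) \<le> f x"
    and h2: "\<And>x. norm x \<ge> R \<Longrightarrow> f x \<le> C * norm x powr (-e2)"
  shows False
proof -
  have "1 \<ge> (c/C) * norm x powr (-(e1 - e2))" if x: "norm x \<ge> max R 1" for x :: "real^'n"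
  proof -
    have nx: "norm x > 0" using x by linarith
    have "c * norm x powr (-e1) \<le> C * norm x powr (-e2)" using h[of x] h2[of x] x by force
    then have "c * norm x powr (-e1) / (C * norm x powr (-e2)) \<le> 1"
      using nx assms by (simp add: divide_simps)
    moreover have "c * norm x powr (-e1) / (C * norm x powr (-e2)) = (c/C) * norm x powr (-(e1 - e2))"
    proof -
      have q: "norm x powr (e2 - e1) = norm x powr (-e1) / norm x powr (-e2)"
        using powr_diff[of "norm x" "-e1" "-e2"] by simp
      have "norm x powr (-e2) > 0" using nx by simp
      then show ?thesis by (simp add: q field_simps)
    qed
    ultimately show ?thesis by simp
  qed
  then show False
    using unbounded_contra[of "\<lambda>_::real^'n. (1::real)" "c/C" "e1 - e2" "max R 1"] assms
    by (auto simp: bounded_iff)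
qed

lemma pred_ball[measurable]: "Measurable.pred borel (\<lambda>x::real^'n. x \<in> ball c r)"
  unfolding mem_ball dist_norm by measurable

lemma int_decay:
  assumes "s > real CARD('n)"
  shows "(\<integral>\<^sup>+x. ennreal ((1 + norm (x::real^'n)) powr (-s)) \<partial>lborel) < \<infinity>"
proof -
  obtain K where K: "\<And>R. R > 0 \<Longrightarrow> (\<integral>\<^sup>+y. indicator (- ball (0::real^'n) R) y * ennreal (norm (y-0) powr (-s)) \<partial>lborel)
            \<le> ennreal (K * R powr (real CARD('n) - s))"
    using D_out[OF assms, of 0] by auto
  have s0: "s > 0" using assms by (smt (verit) of_nat_0_le_iff)
  have "(\<integral>\<^sup>+x. ennreal ((1 + norm (x::real^'n)) powr (-s)) \<partial>lborel)
    \<le> (\<integral>\<^sup>+x. indicator (ball 0 1) x + indicator (- ball (0::real^'n) 1) x * ennreal (norm (x-0) powr (-s)) \<partial>lborel)"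
  proof (rule nn_integral_mono)
    fix x :: "real^'n"
    show "ennreal ((1 + norm x) powr (-s)) \<le> indicator (ball 0 1) x + indicator (- ball 0 1) x * ennreal (norm (x-0) powr (-s))"
    proof (cases "x \<in> ball 0 1")
      case True
      have "1 \<le> (1 + norm x) powr s" by (rule ge_one_powr_ge_zero) (use s0 in auto)
      then have "(1 + norm x) powr (-s) \<le> 1"
        by (simp add: powr_minus_divide divide_le_eq_1)
      then show ?thesis using True by (simp add: ennreal_le_1)
    next
      case False
      then have nx: "norm x \<ge> 1" by auto
      have "(1 + norm x) powr (-s) \<le> norm x powr (-s)"
        using nx s0 by (intro powr_mono2') auto
      then show ?thesis using False by (simp add: ennreal_leI)
    qed
  qed
  also have "\<dots> = (\<integral>\<^sup>+x. indicator (ball (0::real^'n) 1) x \<partial>lborel)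
       + (\<integral>\<^sup>+x. indicator (- ball (0::real^'n) 1) x * ennreal (norm (x-0) powr (-s)) \<partial>lborel)"
    by (rule nn_integral_add) measurable
  also have "\<dots> < \<infinity>"
  proof -
    have "(\<integral>\<^sup>+x. indicator (ball (0::real^'n) 1) x \<partial>lborel) = emeasure lborel (ball (0::real^'n) 1)" by simp
    also have "\<dots> < \<infinity>" by (rule emeasure_lborel_ball_finite)
    finally have A: "(\<integral>\<^sup>+x. indicator (ball (0::real^'n) 1) x \<partial>lborel) < \<infinity>" .
    have B: "(\<integral>\<^sup>+x. indicator (- ball (0::real^'n) 1) x * ennreal (norm (x-0) powr (-s)) \<partial>lborel) < \<infinity>"
      using K[of 1] by (simp add: le_less_trans)
    show ?thesis using A B by simp
  qed
  finally show ?thesis .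
qed

lemma Lp_fin:
  fixes f :: "real^'n \<Rightarrow> real"
  assumes "C > 0" "r > 0" "\<theta> * r > real CARD('n)"
    and fb: "\<And>x. \<bar>f x\<bar> \<le> C * (1 + norm x) powr (-\<theta>)"
  shows "(\<integral>\<^sup>+x. ennreal (\<bar>f x\<bar> powr r) \<partial>lborel) < \<infinity>"
proof -
  have pt: "ennreal (\<bar>f x\<bar> powr r) \<le> ennreal (C powr r) * ennreal ((1 + norm x) powr (-(\<theta>*r)))" for x
  proof -
    have "\<bar>f x\<bar> powr r \<le> (C * (1 + norm x) powr (-\<theta>)) powr r"
      using fb[of x] assms by (intro powr_mono2) auto
    also have "\<dots> = C powr r * (1 + norm x) powr (-(\<theta>*r))"
      using assms by (simp add: powr_mult powr_powr)
    finally show "ennreal (\<bar>f x\<bar> powr r) \<le> ennreal (C powr r) * ennreal ((1 + norm x) powr (-(\<theta>*r)))"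
      by (simp add: ennreal_mult[symmetric] ennreal_leI)
  qed
  have "(\<integral>\<^sup>+x. ennreal (\<bar>f x\<bar> powr r) \<partial>lborel) \<le> (\<integral>\<^sup>+x. ennreal (C powr r) * ennreal ((1 + norm (x::real^'n)) powr (-(\<theta>*r))) \<partial>lborel)"
    by (intro nn_integral_mono pt)
  also have "\<dots> = ennreal (C powr r) * (\<integral>\<^sup>+x. ennreal ((1 + norm (x::real^'n)) powr (-(\<theta>*r))) \<partial>lborel)"
    by (rule nn_integral_cmult) auto
  also have "\<dots> < \<infinity>" using int_decay[OF assms(3)] by (simp add: ennreal_mult_less_top)
  finally show ?thesis .
qed

lemma glob_upper:
  fixes f :: "real^'n \<Rightarrow> real"
  assumes "bounded (range f)" "\<theta> \<ge> 0" "C \<ge> 0"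
    and h: "\<And>x. norm x \<ge> R \<Longrightarrow> \<bar>f x\<bar> \<le> C * norm x powr (-\<theta>)"
  shows "\<exists>C'>0. \<forall>x. \<bar>f x\<bar> \<le> C' * (1 + norm x) powr (-\<theta>)"
proof -
  obtain M where M: "\<And>x. \<bar>f x\<bar> \<le> M" using assms(1) unfolding bounded_iff by auto
  define R0 where "R0 = max R 1"
  define C' where "C' = max (C * 2 powr \<theta>) (\<bar>M\<bar> * (1 + R0) powr \<theta>) + 1"
  have C'0: "C' > 0" unfolding C'_def by (smt (verit) abs_ge_zero max.cobounded2 mult_nonneg_nonneg powr_ge_zero)
  show ?thesis
  proof (intro exI[of _ C'] conjI allI C'0)
    fix x :: "real^'n"
    have nxp: "1 + norm x > 0" by (smt (verit) norm_ge_zero)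
    then have p0: "(1 + norm x) powr (-\<theta>) > 0" by simp
    show "\<bar>f x\<bar> \<le> C' * (1 + norm x) powr (-\<theta>)"
    proof (cases "norm x \<ge> R0")
      case True
      have nx: "norm x \<ge> 1" "norm x \<ge> R" using True by (auto simp: R0_def)
      have "2 powr (-\<theta>) * norm x powr (-\<theta>) \<le> (1 + norm x) powr (-\<theta>)"
        using one_plus_powr_lower[OF nx(1), of \<theta>] assms by simp
      then have "2 powr \<theta> * (2 powr (-\<theta>) * norm x powr (-\<theta>)) \<le> 2 powr \<theta> * (1 + norm x) powr (-\<theta>)"
        by (intro mult_left_mono) auto
      moreover have "2 powr \<theta> * (2 powr (-\<theta>) * norm x powr (-\<theta>)) = norm x powr (-\<theta>)"
        by (simp add: mult.assoc[symmetric] powr_add[symmetric])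
      ultimately have "norm x powr (-\<theta>) \<le> 2 powr \<theta> * (1 + norm x) powr (-\<theta>)" by simp
      then have "C * norm x powr (-\<theta>) \<le> C * 2 powr \<theta> * (1 + norm x) powr (-\<theta>)"
        using assms by (simp add: mult_left_mono mult.assoc)
      also have "\<dots> \<le> C' * (1 + norm x) powr (-\<theta>)"
        using p0 by (intro mult_right_mono) (auto simp: C'_def)
      finally show ?thesis using h[OF nx(2)] by linarith
    next
      case False
      have "(1 + R0) powr (-\<theta>) \<le> (1 + norm x) powr (-\<theta>)"
        using False assms nxp by (intro powr_mono2') auto
      then have "1 \<le> (1 + R0) powr \<theta> * (1 + norm x) powr (-\<theta>)"
        using False by (simp add: powr_minus field_simps R0_def)
      then have "\<bar>M\<bar> \<le> \<bar>M\<bar> * (1 + R0) powr \<theta> * (1 + norm x) powr (-\<theta>)"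
        by (metis abs_ge_zero mult.assoc mult.right_neutral mult_left_mono)
      also have "\<dots> \<le> C' * (1 + norm x) powr (-\<theta>)"
        using p0 by (intro mult_right_mono) (auto simp: C'_def)
      finally show ?thesis using M[of x] by linarith
    qed
  qed
qed

lemma pot_lower_const:
  fixes u :: "real^'n \<Rightarrow> real"
  assumes "\<alpha> < real CARD('n)" "0 \<le> \<sigma>" "p > 0" and um: "u \<in> borel_measurable lborel"
    and upos: "\<And>x. u x > 0"
  shows "\<exists>c>0. \<forall>x. norm x \<ge> 1 \<longrightarrow> Pot \<alpha> \<sigma> (\<lambda>y. u y powr p) x \<ge> ennreal (c * norm x powr (-(real CARD('n) - \<alpha>)))"
proof -
  note [measurable] = um
  define \<beta> where "\<beta> = real CARD('n) - \<alpha>"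
  have \<beta>0: "\<beta> > 0" using assms by (simp add: \<beta>_def)
  define E where "E k = {y. y \<in> ball 0 1 \<and> 1 / real (Suc k) \<le> u y}" for k
  have Em: "E k \<in> sets lborel" for k unfolding E_def by measurable
  have UE: "(\<Union>k. E k) = ball 0 1"
  proof
    show "(\<Union>k. E k) \<subseteq> ball 0 1" by (auto simp: E_def)
    show "ball 0 1 \<subseteq> (\<Union>k. E k)"
    proof
      fix y :: "real^'n" assume y: "y \<in> ball 0 1"
      obtain n where n: "n > 0" "inverse (real n) < u y" using ex_inverse_of_nat_less[OF upos[of y]] by auto
      then obtain k where k: "n = Suc k" using gr0_implies_Suc by blast
      have "y \<in> E k" using y n k by (auto simp: E_def field_simps)
      then show "y \<in> (\<Union>k. E k)" by auto
    qed
  qed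
  have "\<exists>k. emeasure lborel (E k) \<noteq> 0"
  proof (rule ccontr)
    assume "\<not> ?thesis"
    then have "emeasure lborel (\<Union>k. E k) = 0"
      using Em by (intro emeasure_UN_eq_0) auto
    then have "emeasure lborel (ball (0::real^'n) 1) = 0" using UE by simp
    moreover have "emeasure lborel (ball (0::real^'n) 1) = ennreal (unit_ball_vol (real CARD('n)) * 1 ^ CARD('n))"
      using emeasure_ball[of 1 "0::real^'n"] by simp
    moreover have "unit_ball_vol (real CARD('n)) > 0" by (rule unit_ball_vol_pos) simp
    ultimately show False by simp
  qed
  then obtain k where k: "emeasure lborel (E k) \<noteq> 0" by auto
  have fin: "emeasure lborel (E k) \<noteq> \<infinity>"
  proof -
    have "emeasure lborel (E k) \<le> emeasure lborel (ball (0::real^'n) 1)"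
      by (rule emeasure_mono) (auto simp: E_def)
    also have "\<dots> < \<infinity>" by (rule emeasure_lborel_ball_finite)
    finally show ?thesis by simp
  qed
  define m where "m = measure lborel (E k)"
  have Eeq: "emeasure lborel (E k) = ennreal m" using emeasure_eq_ennreal_measure[of lborel "E k"] fin by (simp add: m_def)
  have m0: "m > 0" using k Eeq by (simp add: m_def measure_nonneg zero_less_measure_iff)
  define \<epsilon> where "\<epsilon> = 1 / real (Suc k)"
  have \<epsilon>0: "\<epsilon> > 0" by (simp add: \<epsilon>_def)
  define c where "c = \<epsilon> powr p * 2 powr (-\<beta>) * m"
  have c0: "c > 0" using m0 \<epsilon>0 by (simp add: c_def)
  show ?thesis
  proof (rule exI[of _ c], intro conjI allI impI c0)
    fix x :: "real^'n" assume x: "norm x \<ge> 1"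
    define c1 where "c1 = \<epsilon> powr p / (2 * norm x) powr \<beta>"
    have c10: "c1 \<ge> 0" by (simp add: c1_def)
    have ptw: "c1 \<le> u y powr p / (norm (x - y) powr \<beta> * norm y powr \<sigma>)" if y: "y \<in> E k" "y \<noteq> 0" "y \<noteq> x" for y
    proof -
      have ny: "norm y < 1" "norm y > 0" using y by (auto simp: E_def)
      have uy: "u y \<ge> \<epsilon>" using y by (simp add: E_def \<epsilon>_def)
      have A: "\<epsilon> powr p \<le> u y powr p" using uy \<epsilon>0 assms by (intro powr_mono2) auto
      have dxy: "norm (x - y) > 0" using y by simp
      have dxy2: "norm (x - y) \<le> 2 * norm x" using norm_triangle_ineq4[of x y] ny x by linarith
      have B1: "norm (x - y) powr \<beta> \<le> (2 * norm x) powr \<beta>" using dxy dxy2 \<beta>0 by (intro powr_mono2) auto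
      have B2: "norm y powr \<sigma> \<le> 1" using ny assms by (intro powr_le1) auto
      have B: "norm (x - y) powr \<beta> * norm y powr \<sigma> \<le> (2 * norm x) powr \<beta>"
        using B1 B2 mult_mono[OF B1 B2] by simp
      have C: "0 < norm (x - y) powr \<beta> * norm y powr \<sigma>" using dxy ny by simp
      show ?thesis unfolding c1_def
        by (rule frac_le) (use A B C \<epsilon>0 in auto)
    qed
    have "ennreal (c1 * m) = ennreal c1 * emeasure lborel (E k)" using Eeq c10 m0 by (simp add: ennreal_mult)
    also have "\<dots> = (\<integral>\<^sup>+y. ennreal c1 * indicator (E k) y \<partial>lborel)"
      using Em by (rule nn_integral_cmult_indicator[symmetric])
    also have "\<dots> \<le> Pot \<alpha> \<sigma> (\<lambda>y. u y powr p) x"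
      unfolding Pot_def
    proof (rule nn_integral_mono_AE)
      have "AE y in lborel. y \<noteq> 0 \<and> y \<noteq> x"
        using AE_lborel_singleton[of 0] AE_lborel_singleton[of x] by (auto elim: AE_mp)
      then show "AE y in lborel. ennreal c1 * indicator (E k) y
          \<le> ennreal (u y powr p / (norm (x - y) powr (real CARD('n) - \<alpha>) * norm y powr \<sigma>))"
      proof (rule AE_mp, intro AE_I2 impI)
        fix y :: "real^'n" assume "y \<noteq> 0 \<and> y \<noteq> x"
        then show "ennreal c1 * indicator (E k) y
          \<le> ennreal (u y powr p / (norm (x - y) powr (real CARD('n) - \<alpha>) * norm y powr \<sigma>))"
          using ptw[of y] by (auto simp: indicator_def \<beta>_def intro: ennreal_leI)
      qed
    qed
    finally have I: "ennreal (c1 * m) \<le> Pot \<alpha> \<sigma> (\<lambda>y. u y powr p) x" .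
    have "c1 * m = c * norm x powr (-\<beta>)"
    proof -
      have "(2 * norm x) powr \<beta> = 2 powr \<beta> * norm x powr \<beta>" by (simp add: powr_mult)
      then show ?thesis unfolding c1_def c_def by (simp add: powr_minus field_simps)
    qed
    then show "Pot \<alpha> \<sigma> (\<lambda>y. u y powr p) x \<ge> ennreal (c * norm x powr (-(real CARD('n) - \<alpha>)))"
      using I by (simp add: \<beta>_def)
  qed
qed

lemma upper_ptw:
  fixes x y :: "real^'n"
  assumes h: "h = norm x / 2" "h > 0" and y: "y \<noteq> 0" "y \<noteq> x"
    and gb: "g \<le> C * (1 + norm y) powr (-a)" and pars: "a \<ge> 0" "\<sigma> \<ge> 0" "\<beta> > 0" "C \<ge> 0"
  shows "g / (norm (x - y) powr \<beta> * norm y powr \<sigma>) \<le>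
     (if norm y < h then C * h powr (-\<beta>) * norm y powr (-(a+\<sigma>))
      else if norm (y - x) < h then C * h powr (-(a+\<sigma>)) * norm (y - x) powr (-\<beta>)
      else C * 3 powr \<beta> * norm y powr (-(a+\<sigma>+\<beta>)))"
proof -
  define ny where "ny = norm y"
  define d where "d = norm (x - y)"
  have ny0: "ny > 0" using y by (simp add: ny_def)
  have d0: "d > 0" using y by (simp add: d_def)
  have dyx: "norm (y - x) = d" by (simp add: d_def norm_minus_commute)
  have g1: "g \<le> C * ny powr (-a)"
  proof -
    have "(1 + ny) powr (-a) \<le> ny powr (-a)" using ny0 pars by (intro powr_mono2') auto
    then have "C * (1 + ny) powr (-a) \<le> C * ny powr (-a)" using pars by (intro mult_left_mono) auto
    then show ?thesis using gb by (simp add: ny_def)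
  qed
  have den: "d powr \<beta> * ny powr \<sigma> > 0" using d0 ny0 by simp
  have G: "g / (d powr \<beta> * ny powr \<sigma>) \<le> C * ny powr (-(a+\<sigma>)) * d powr (-\<beta>)"
  proof -
    have "g / (d powr \<beta> * ny powr \<sigma>) \<le> C * ny powr (-a) / (d powr \<beta> * ny powr \<sigma>)"
      using g1 den by (simp add: divide_right_mono)
    also have "\<dots> = C * ny powr (-(a+\<sigma>)) * d powr (-\<beta>)"
    proof -
      have "ny powr (-(a+\<sigma>)) = ny powr (-a) / ny powr \<sigma>"
        using powr_diff[of ny "-a" \<sigma>] by simp
      moreover have "d powr (-\<beta>) = 1 / d powr \<beta>" by (simp add: powr_minus_divide)
      ultimately show ?thesis by simp
    qed
    finally show ?thesis .
  qed
  have Cs: "C * ny powr (-(a+\<sigma>)) \<ge> 0" using pars by simp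
  show ?thesis
  proof (cases "ny < h")
    case True
    have "d \<ge> h" using norm_triangle_ineq2[of x y] True h by (simp add: d_def ny_def)
    then have "d powr (-\<beta>) \<le> h powr (-\<beta>)" using h pars by (intro powr_mono2') auto
    then have "C * ny powr (-(a+\<sigma>)) * d powr (-\<beta>) \<le> C * ny powr (-(a+\<sigma>)) * h powr (-\<beta>)"
      using Cs by (intro mult_left_mono) auto
    then show ?thesis using G True by (simp add: ny_def d_def mult_ac)
  next
    case False
    note F = False
    show ?thesis
    proof (cases "d < h")
      case True
      have "ny powr (-(a+\<sigma>)) \<le> h powr (-(a+\<sigma>))" using F h pars by (intro powr_mono2') auto
      then have "C * ny powr (-(a+\<sigma>)) * d powr (-\<beta>) \<le> C * h powr (-(a+\<sigma>)) * d powr (-\<beta>)"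
        using pars by (intro mult_right_mono mult_left_mono) auto
      then show ?thesis using G True F dyx by (simp add: ny_def d_def)
    next
      case False
      have "ny \<le> norm x + d" using norm_triangle_ineq4[of x "x - y"]
        by (simp add: ny_def d_def)
      then have "ny / 3 \<le> d" using False h by simp
      moreover have "ny / 3 > 0" using ny0 by simp
      ultimately have "d powr (-\<beta>) \<le> (ny/3) powr (-\<beta>)" using pars by (intro powr_mono2') auto
      also have "(ny/3) powr (-\<beta>) = 3 powr \<beta> * ny powr (-\<beta>)"
      proof -
        have "(ny/3) powr (-\<beta>) = ny powr (-\<beta>) / 3 powr (-\<beta>)"
          using ny0 by (simp add: powr_divide)
        also have "ny powr (-\<beta>) / 3 powr (-\<beta>) = 3 powr \<beta> * ny powr (-\<beta>)"
          by (simp add: powr_minus divide_inverse mult.commute)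
        finally show ?thesis .
      qed
      finally have "C * ny powr (-(a+\<sigma>)) * d powr (-\<beta>) \<le> C * ny powr (-(a+\<sigma>)) * (3 powr \<beta> * ny powr (-\<beta>))"
        using Cs by (intro mult_left_mono) auto
      also have "\<dots> = C * 3 powr \<beta> * ny powr (-(a+\<sigma>+\<beta>))"
        by (simp add: powr_add[symmetric] mult_ac)
      finally show ?thesis using G False F dyx by (simp add: ny_def d_def)
    qed
  qed
qed

lemma pot_upper:
  fixes g :: "real^'n \<Rightarrow> real"
  assumes "0 < \<alpha>" "\<alpha> < real CARD('n)" "0 \<le> \<sigma>" "0 \<le> a" "\<alpha> < a + \<sigma>" "a + \<sigma> < real CARD('n)" "C \<ge> 0"
    and gb: "\<And>y. g y \<le> C * (1 + norm y) powr (-a)"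
  shows "\<exists>K. \<forall>x. norm x \<ge> 1 \<longrightarrow> Pot \<alpha> \<sigma> g x \<le> ennreal (K * norm x powr (-(a+\<sigma>-\<alpha>)))"
proof -
  define N where "N = real CARD('n)"
  define \<beta> where "\<beta> = N - \<alpha>"
  define s where "s = a + \<sigma>"
  have \<beta>0: "\<beta> > 0" using assms by (simp add: \<beta>_def N_def)
  have s0: "s \<ge> 0" using assms by (simp add: s_def)
  obtain K1 where K1: "K1 \<ge> 0" "\<And>c R. R > 0 \<Longrightarrow> (\<integral>\<^sup>+y. indicator (ball (c::real^'n) R) y * ennreal (norm (y-c) powr (-s)) \<partial>lborel)
            \<le> ennreal (K1 * R powr (N - s))"
    using D_in[where 'n='n, of s] assms by (auto simp: s_def N_def)
  obtain K2 where K2: "K2 \<ge> 0" "\<And>c R. R > 0 \<Longrightarrow> (\<integral>\<^sup>+y. indicator (ball (c::real^'n) R) y * ennreal (norm (y-c) powr (-\<beta>)) \<partial>lborel)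
            \<le> ennreal (K2 * R powr (N - \<beta>))"
    using D_in[where 'n='n, of \<beta>] assms by (auto simp: \<beta>_def N_def)
  obtain K3 where K3: "K3 \<ge> 0" "\<And>R. R > 0 \<Longrightarrow> (\<integral>\<^sup>+y. indicator (- ball (0::real^'n) R) y * ennreal (norm (y-0) powr (-(s+\<beta>))) \<partial>lborel)
            \<le> ennreal (K3 * R powr (N - (s+\<beta>)))"
    using D_out[where 'n='n and b="s+\<beta>" and c=0] assms by (auto simp: s_def \<beta>_def N_def)
  define K where "K = C * (K1 + K2 + 3 powr \<beta> * K3) * 2 powr (s - \<alpha>)"
  show ?thesis
  proof (rule exI[of _ K], intro allI impI)
    fix x :: "real^'n" assume x: "norm x \<ge> 1"
    define h where "h = norm x / 2"
    have h0: "h > 0" unfolding h_def using x by linarith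
    define A1 where "A1 = C * h powr (-\<beta>)"
    define A2 where "A2 = C * h powr (-s)"
    define A3 where "A3 = C * 3 powr \<beta>"
    have A0: "A1 \<ge> 0" "A2 \<ge> 0" "A3 \<ge> 0" using assms by (auto simp: A1_def A2_def A3_def)
    define F1 where "F1 y = indicator (ball 0 h) y * ennreal (norm (y-0) powr (-s))" for y :: "real^'n"
    define F2 where "F2 y = indicator (ball x h) y * ennreal (norm (y-x) powr (-\<beta>))" for y :: "real^'n"
    define F3 where "F3 y = indicator (- ball 0 h) y * ennreal (norm (y-0) powr (-(s+\<beta>)))" for y :: "real^'n"
    have m1: "F1 \<in> borel_measurable lborel" unfolding F1_def[abs_def] by measurable
    have m2: "F2 \<in> borel_measurable lborel" unfolding F2_def[abs_def] by measurable
    have m3: "F3 \<in> borel_measurable lborel" unfolding F3_def[abs_def] by measurable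
    have ptw: "ennreal (g y / (norm (x - y) powr \<beta> * norm y powr \<sigma>))
        \<le> ennreal A1 * F1 y + ennreal A2 * F2 y + ennreal A3 * F3 y" for y
    proof (cases "y = 0 \<or> y = x")
      case True
      then show ?thesis by auto
    next
      case False
      have U: "g y / (norm (x - y) powr \<beta> * norm y powr \<sigma>) \<le>
     (if norm y < h then C * h powr (-\<beta>) * norm y powr (-(a+\<sigma>))
      else if norm (y - x) < h then C * h powr (-(a+\<sigma>)) * norm (y - x) powr (-\<beta>)
      else C * 3 powr \<beta> * norm y powr (-(a+\<sigma>+\<beta>)))"
        by (rule upper_ptw[OF h_def h0]) (use False gb assms \<beta>0 in auto)
      show ?thesis
      proof (cases "norm y < h")
        case True
        then have "ennreal (g y / (norm (x - y) powr \<beta> * norm y powr \<sigma>)) \<le> ennreal A1 * F1 y"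
          using U A0 by (auto simp: F1_def A1_def s_def ennreal_mult[symmetric] intro!: ennreal_leI)
        then show ?thesis by (simp add: add.assoc order_trans[OF _ add_increasing2])
      next
        case F: False
        show ?thesis
        proof (cases "norm (y - x) < h")
          case True
          then have "ennreal (g y / (norm (x - y) powr \<beta> * norm y powr \<sigma>)) \<le> ennreal A2 * F2 y"
            using U A0 F by (auto simp: F2_def A2_def s_def dist_norm norm_minus_commute ennreal_mult[symmetric] intro!: ennreal_leI)
          then show ?thesis by (metis add.commute add_increasing2 order_trans zero_le le_iff_add)
        next
          case False
          then have "ennreal (g y / (norm (x - y) powr \<beta> * norm y powr \<sigma>)) \<le> ennreal A3 * F3 y"
            using U A0 F by (auto simp: F3_def A3_def s_def ennreal_mult[symmetric] add.assoc intro!: ennreal_leI)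
          then show ?thesis by (metis add_increasing zero_le)
        qed
      qed
    qed
    have "Pot \<alpha> \<sigma> g x \<le> (\<integral>\<^sup>+y. ennreal A1 * F1 y + ennreal A2 * F2 y + ennreal A3 * F3 y \<partial>lborel)"
      unfolding Pot_def using ptw by (intro nn_integral_mono) (simp add: \<beta>_def N_def)
    also have "\<dots> = ennreal A1 * (\<integral>\<^sup>+y. F1 y \<partial>lborel) + ennreal A2 * (\<integral>\<^sup>+y. F2 y \<partial>lborel) + ennreal A3 * (\<integral>\<^sup>+y. F3 y \<partial>lborel)"
      using m1 m2 m3 by (simp add: nn_integral_add nn_integral_cmult)
    also have "\<dots> \<le> ennreal A1 * ennreal (K1 * h powr (N - s)) + ennreal A2 * ennreal (K2 * h powr (N - \<beta>))
                  + ennreal A3 * ennreal (K3 * h powr (N - (s+\<beta>)))"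
    proof -
      have "(\<integral>\<^sup>+y. F1 y \<partial>lborel) \<le> ennreal (K1 * h powr (N - s))" unfolding F1_def using K1(2)[OF h0] .
      moreover have "(\<integral>\<^sup>+y. F2 y \<partial>lborel) \<le> ennreal (K2 * h powr (N - \<beta>))" unfolding F2_def using K2(2)[OF h0] .
      moreover have "(\<integral>\<^sup>+y. F3 y \<partial>lborel) \<le> ennreal (K3 * h powr (N - (s+\<beta>)))" unfolding F3_def using K3(2)[OF h0] .
      ultimately show ?thesis by (intro add_mono mult_left_mono) auto
    qed
    also have "\<dots> = ennreal (A1 * (K1 * h powr (N - s)) + A2 * (K2 * h powr (N - \<beta>)) + A3 * (K3 * h powr (N - (s+\<beta>))))"
      using A0 K1(1) K2(1) K3(1) by (simp add: ennreal_mult[symmetric] ennreal_plus[symmetric] del: ennreal_plus)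
    also have "A1 * (K1 * h powr (N - s)) + A2 * (K2 * h powr (N - \<beta>)) + A3 * (K3 * h powr (N - (s+\<beta>)))
        = K * norm x powr (-(a+\<sigma>-\<alpha>))"
    proof -
      have e1: "h powr (-\<beta>) * h powr (N - s) = h powr (\<alpha> - s)" by (simp add: powr_add[symmetric] \<beta>_def)
      have e2: "h powr (-s) * h powr (N - \<beta>) = h powr (\<alpha> - s)" by (simp add: powr_add[symmetric] \<beta>_def)
      have e3: "h powr (N - (s+\<beta>)) = h powr (\<alpha> - s)" by (simp add: \<beta>_def)
      have e4: "h powr (\<alpha> - s) = 2 powr (s - \<alpha>) * norm x powr (-(a+\<sigma>-\<alpha>))"
      proof -
        have "h powr (\<alpha> - s) = norm x powr (\<alpha> - s) / 2 powr (\<alpha> - s)" unfolding h_def using x by (simp add: powr_divide)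
        moreover have "2 powr (\<alpha> - s) = inverse (2 powr (s - \<alpha>))" using powr_minus[of 2 "s - \<alpha>"] by simp
        ultimately show ?thesis by (simp add: s_def divide_inverse mult.commute)
      qed
      have "A1 * (K1 * h powr (N - s)) + A2 * (K2 * h powr (N - \<beta>)) + A3 * (K3 * h powr (N - (s+\<beta>)))
          = C * K1 * (h powr (-\<beta>) * h powr (N - s)) + C * K2 * (h powr (-s) * h powr (N - \<beta>)) + C * 3 powr \<beta> * K3 * h powr (N - (s+\<beta>))"
        by (simp add: A1_def A2_def A3_def mult_ac)
      also have "\<dots> = C * (K1 + K2 + 3 powr \<beta> * K3) * h powr (\<alpha> - s)"
        unfolding e1 e2 e3 by (simp add: algebra_simps)
      also have "\<dots> = K * norm x powr (-(a+\<sigma>-\<alpha>))"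
        unfolding e4 K_def by (simp add: mult_ac)
      finally show ?thesis .
    qed
    finally show "Pot \<alpha> \<sigma> g x \<le> ennreal (K * norm x powr (-(a+\<sigma>-\<alpha>)))" .
  qed
qed

lemma p0_swap: "q0 \<alpha> \<sigma>2 \<sigma>1 q p = p0 \<alpha> \<sigma>1 \<sigma>2 p q"
  by (simp add: q0_def p0_def mult.commute)

lemma q0_swap: "p0 \<alpha> \<sigma>2 \<sigma>1 q p = q0 \<alpha> \<sigma>1 \<sigma>2 p q"
  by (simp add: q0_def p0_def mult.commute)

lemma int_swap: "integrable_solution \<alpha> \<sigma>2 \<sigma>1 q p v u = integrable_solution \<alpha> \<sigma>1 \<sigma>2 p q u v"
  by (auto simp: integrable_solution_def p0_swap[of \<alpha> \<sigma>2 \<sigma>1 q p] q0_swap[of \<alpha> \<sigma>2 \<sigma>1 q p])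

lemma id_P:
  assumes "p * q > 1"
  shows "p * q0 \<alpha> \<sigma>1 \<sigma>2 p q + \<sigma>2 - \<alpha> = p0 \<alpha> \<sigma>1 \<sigma>2 p q"
proof -
  have nz: "p * q - 1 \<noteq> 0" using assms by simp
  show ?thesis unfolding q0_def p0_def using nz by (simp add: field_simps)
qed

lemma id_Q:
  assumes "p * q > 1"
  shows "q * p0 \<alpha> \<sigma>1 \<sigma>2 p q + \<sigma>1 - \<alpha> = q0 \<alpha> \<sigma>1 \<sigma>2 p q"
  using id_P[of q p \<alpha> \<sigma>2 \<sigma>1] assms
  by (simp only: p0_swap[of \<alpha> \<sigma>2 \<sigma>1 q p] q0_swap[of \<alpha> \<sigma>2 \<sigma>1 q p] mult.commute)

lemma part_ii_u:
  fixes u v :: "real^'n \<Rightarrow> real"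
  assumes pars: "p > 0" "q > 0" "p * q > 1" "0 < \<alpha>" "\<alpha> < real CARD('n)"
    "0 \<le> \<sigma>1" "\<sigma>1 < \<alpha>" "0 \<le> \<sigma>2" "\<sigma>2 < \<alpha>"
    and bu: "bounded (range u)" and bv: "bounded (range v)"
    and upos: "\<And>x. u x > 0" and vpos: "\<And>x. v x > 0"
    and um: "u \<in> borel_measurable lborel" and vm: "v \<in> borel_measurable lborel"
    and solu: "\<And>x. ennreal (u x) = Pot \<alpha> \<sigma>1 (\<lambda>y. v y powr q) x"
    and solv: "\<And>x. ennreal (v x) = Pot \<alpha> \<sigma>2 (\<lambda>y. u y powr p) x"
    and nint: "\<not> integrable_solution \<alpha> \<sigma>1 \<sigma>2 p q u v"
    and th3: "\<theta>3 > q0 \<alpha> \<sigma>1 \<sigma>2 p q"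
    and C: "C > 0" and ub: "\<And>x. u x \<le> C * (1 + norm x) powr (-\<theta>3)"
  shows False
proof -
  define N where "N = real CARD('n)"
  define Q where "Q = q0 \<alpha> \<sigma>1 \<sigma>2 p q"
  define P where "P = p0 \<alpha> \<sigma>1 \<sigma>2 p q"
  have Q0: "Q > 0" unfolding Q_def using q0_pos pars by blast
  have P0: "P > 0" unfolding P_def using q0_pos[of q p \<sigma>2 \<alpha> \<sigma>1] pars by (simp add: p0_swap mult.commute)
  have idP: "p * Q + \<sigma>2 - \<alpha> = P" unfolding P_def Q_def using id_P pars by blast
  have idQ: "q * P + \<sigma>1 - \<alpha> = Q" unfolding P_def Q_def using id_Q pars by blast
  have N0: "N > 0" using pars by (simp add: N_def)
  have th30: "\<theta>3 > 0" using th3 Q0 by (simp add: Q_def)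
  have intU: "(\<integral>\<^sup>+x. ennreal (\<bar>u x\<bar> powr (N / Q)) \<partial>lborel) < \<infinity>"
  proof (rule Lp_fin[OF C])
    show "N / Q > 0" using N0 Q0 by simp
    have "\<theta>3 / Q > 1" using th3 Q0 by (simp add: Q_def)
    then have "N < N * (\<theta>3 / Q)" using N0 by (metis mult.right_neutral mult_strict_left_mono)
    then show "\<theta>3 * (N / Q) > real CARD('n)" by (simp add: N_def mult.commute)
    show "\<bar>u x\<bar> \<le> C * (1 + norm x) powr (-\<theta>3)" for x using ub[of x] upos[of x] by simp
  qed
  have PN: "P < N - \<alpha>"
  proof (rule ccontr)
    assume "\<not> P < N - \<alpha>"
    then have PN': "N - \<alpha> \<le> P" by simp
    obtain c5 where c5: "c5 > 0" and
      l5: "\<And>x. norm x \<ge> 1 \<Longrightarrow> Pot \<alpha> \<sigma>2 (\<lambda>y. u y powr p) x \<ge> ennreal (c5 * norm x powr (-(real CARD('n) - \<alpha>)))"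
      using pot_lower_const[of \<alpha> \<sigma>2 p u] pars um upos by auto
    have lv: "v x \<ge> c5 * norm x powr (-P)" if x: "norm x \<ge> 1" for x
    proof -
      have "x \<noteq> 0" using x by auto
      then have "c5 * norm x powr (-(N - \<alpha>)) \<le> v x"
        using l5[OF x] solv[of x] x c5 by (intro ennreal_le_pos) (auto simp: N_def)
      moreover have "norm x powr (-P) \<le> norm x powr (-(N - \<alpha>))"
        using x PN' by (intro powr_mono) auto
      ultimately show ?thesis using c5 by (meson mult_left_mono less_imp_le order_trans)
    qed
    obtain c6 R6 where c6: "c6 > 0" and
      l6: "\<And>x. norm x \<ge> R6 \<Longrightarrow> u x \<ge> c6 * norm x powr (-(q * P + \<sigma>1 - \<alpha>))"
      using transfer[of \<alpha> \<sigma>1 q c5 P 1 v u] pars c5 lv solu P0 by auto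
    show False
    proof (rule decay_contra[of c6 C Q \<theta>3 "max R6 1" u])
      show "c6 * norm x powr (-Q) \<le> u x" if "norm x \<ge> max R6 1" for x
        using l6[of x] that idQ by simp
      show "u x \<le> C * norm x powr (-\<theta>3)" if x: "norm x \<ge> max R6 1" for x
      proof -
        have "(1 + norm x) powr (-\<theta>3) \<le> norm x powr (-\<theta>3)"
          using x th30 by (intro powr_mono2') auto
        then show ?thesis using ub[of x] C by (meson mult_left_mono less_imp_le order_trans)
      qed
    qed (use c6 C th3 in \<open>auto simp: Q_def\<close>)
  qed
  define M where "M = min (p * \<theta>3 + \<sigma>2 - \<alpha>) (N - \<alpha>)"
  have PM: "P < M"
  proof -
    have "p * Q < p * \<theta>3" using th3 pars by (simp add: Q_def)
    then show ?thesis using idP PN by (simp add: M_def)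
  qed
  define \<gamma> where "\<gamma> = (P + M) / 2"
  have g1: "P < \<gamma>" "\<gamma> < M" using PM by (auto simp: \<gamma>_def)
  define a' where "a' = \<gamma> + \<alpha> - \<sigma>2"
  have a'0: "a' \<ge> 0" using g1 P0 pars by (simp add: a'_def)
  have a'1: "\<alpha> < a' + \<sigma>2" using g1 P0 by (simp add: a'_def)
  have a'2: "a' + \<sigma>2 < real CARD('n)" using g1 by (simp add: a'_def M_def N_def)
  have a'3: "a' \<le> p * \<theta>3" using g1 by (simp add: a'_def M_def)
  have gb: "u y powr p \<le> C powr p * (1 + norm y) powr (-a')" for y
  proof -
    have "u y powr p \<le> (C * (1 + norm y) powr (-\<theta>3)) powr p"
      using ub[of y] upos[of y] pars by (intro powr_mono2) auto
    also have "(C * (1 + norm y) powr (-\<theta>3)) powr p = C powr p * (1 + norm y) powr (-(p*\<theta>3))"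
      using C by (simp add: powr_mult powr_powr mult.commute)
    also have "C powr p * (1 + norm y) powr (-(p*\<theta>3)) \<le> C powr p * (1 + norm y) powr (-a')"
      using a'3 by (intro mult_left_mono powr_mono) auto
    finally show ?thesis .
  qed
  obtain K where K: "\<And>x. norm x \<ge> 1 \<Longrightarrow> Pot \<alpha> \<sigma>2 (\<lambda>y. u y powr p) x \<le> ennreal (K * norm x powr (-(a'+\<sigma>2-\<alpha>)))"
    using pot_upper[of \<alpha> \<sigma>2 a' "C powr p" "\<lambda>y. u y powr p"] pars a'0 a'1 a'2 gb by auto
  have vub: "\<bar>v x\<bar> \<le> max K 0 * norm x powr (-\<gamma>)" if x: "norm x \<ge> 1" for x
  proof -
    have "v x \<le> K * norm x powr (-\<gamma>)"
      using K[OF x] solv[of x] vpos[of x] by (intro ennreal_le_pos) (auto simp: a'_def)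
    moreover have "K * norm x powr (-\<gamma>) \<le> max K 0 * norm x powr (-\<gamma>)"
      by (intro mult_right_mono) auto
    ultimately show ?thesis using vpos[of x] by simp
  qed
  obtain C' where C': "C' > 0" "\<And>x. \<bar>v x\<bar> \<le> C' * (1 + norm x) powr (-\<gamma>)"
    using glob_upper[OF bv, of \<gamma> "max K 0" 1] vub g1 P0 by auto
  have intV: "(\<integral>\<^sup>+x. ennreal (\<bar>v x\<bar> powr (N / P)) \<partial>lborel) < \<infinity>"
  proof (rule Lp_fin[OF C'(1)])
    show "N / P > 0" using N0 P0 by simp
    have "\<gamma> / P > 1" using g1 P0 by simp
    then have "N < N * (\<gamma> / P)" using N0 by (metis mult.right_neutral mult_strict_left_mono)
    then show "\<gamma> * (N / P) > real CARD('n)" by (simp add: N_def mult.commute)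
    show "\<bar>v x\<bar> \<le> C' * (1 + norm x) powr (-\<gamma>)" for x by (rule C'(2))
  qed
  have "integrable_solution \<alpha> \<sigma>1 \<sigma>2 p q u v"
    unfolding integrable_solution_def using intU intV by (simp add: N_def Q_def P_def)
  then show False using nint by simp
qed

lemma comparable_bounds:
  assumes "asymp_comparable f (\<lambda>x::real^'n. norm x powr (-\<theta>))"
  shows "\<exists>c>0. \<exists>C>0. \<exists>R. \<forall>x. norm x \<ge> R \<longrightarrow> c * norm x powr (-\<theta>) \<le> f x \<and> f x \<le> C * norm x powr (-\<theta>)"
  using assms unfolding asymp_comparable_def eventually_at_infinity by blast

lemma Lp_from_eventual:
  fixes f :: "real^'n \<Rightarrow> real"
  assumes "bounded (range f)" "\<And>x. f x > 0" "C > 0" "Q > 0" "\<theta> > Q"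
    and ub: "\<And>x. norm x \<ge> R \<Longrightarrow> f x \<le> C * norm x powr (-\<theta>)"
  shows "(\<integral>\<^sup>+x. ennreal (\<bar>f x\<bar> powr (real CARD('n) / Q)) \<partial>lborel) < \<infinity>"
proof -
  obtain C' where C': "C' > 0" "\<And>x. \<bar>f x\<bar> \<le> C' * (1 + norm x) powr (-\<theta>)"
    using glob_upper[OF assms(1), of \<theta> C R] assms ub by (auto simp: abs_of_pos)
  show ?thesis
  proof (rule Lp_fin[OF C'(1)])
    have N0: "real CARD('n) > 0" by simp
    show "real CARD('n) / Q > 0" using assms by simp
    have "\<theta> / Q > 1" using assms by simp
    then have "real CARD('n) < real CARD('n) * (\<theta> / Q)" using N0 by (metis mult.right_neutral mult_strict_left_mono)
    then show "\<theta> * (real CARD('n) / Q) > real CARD('n)" by (simp add: mult.commute)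
    show "\<bar>f x\<bar> \<le> C' * (1 + norm x) powr (-\<theta>)" for x by (rule C'(2))
  qed
qed

lemma part_iii:
  fixes u v :: "real^'n \<Rightarrow> real"
  assumes pars: "p > 0" "q > 0" "p * q > 1" "0 < \<alpha>" "\<alpha> < real CARD('n)"
    "0 \<le> \<sigma>1" "\<sigma>1 < \<alpha>" "0 \<le> \<sigma>2" "\<sigma>2 < \<alpha>"
    and bu: "bounded (range u)" and bv: "bounded (range v)"
    and upos: "\<And>x. u x > 0" and vpos: "\<And>x. v x > 0"
    and solu: "\<And>x. ennreal (u x) = Pot \<alpha> \<sigma>1 (\<lambda>y. v y powr q) x"
    and solv: "\<And>x. ennreal (v x) = Pot \<alpha> \<sigma>2 (\<lambda>y. u y powr p) x"
    and nint: "\<not> integrable_solution \<alpha> \<sigma>1 \<sigma>2 p q u v"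
    and dec: "decaying_solution u v"
  shows "asymp_comparable u (\<lambda>x. norm x powr (- q0 \<alpha> \<sigma>1 \<sigma>2 p q)) \<and>
         asymp_comparable v (\<lambda>x. norm x powr (- p0 \<alpha> \<sigma>1 \<sigma>2 p q))"
proof -
  define Q where "Q = q0 \<alpha> \<sigma>1 \<sigma>2 p q"
  define P where "P = p0 \<alpha> \<sigma>1 \<sigma>2 p q"
  have Q0: "Q > 0" unfolding Q_def using q0_pos pars by blast
  have P0: "P > 0" unfolding P_def using q0_pos[of q p \<sigma>2 \<alpha> \<sigma>1] pars by (simp add: p0_swap mult.commute)
  have idP: "p * Q + \<sigma>2 - \<alpha> = P" unfolding P_def Q_def using id_P pars by blast
  have idQ: "q * P + \<sigma>1 - \<alpha> = Q" unfolding P_def Q_def using id_Q pars by blast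
  obtain \<theta>1 \<theta>2 where t1: "\<theta>1 > 0" and t2: "\<theta>2 > 0"
    and cu: "asymp_comparable u (\<lambda>x. norm x powr (-\<theta>1))"
    and cv: "asymp_comparable v (\<lambda>x. norm x powr (-\<theta>2))"
    using dec unfolding decaying_solution_def by blast
  obtain c1 C1 R1 where c1: "c1 > 0" "C1 > 0" and
    b1: "\<And>x. norm x \<ge> R1 \<Longrightarrow> c1 * norm x powr (-\<theta>1) \<le> u x \<and> u x \<le> C1 * norm x powr (-\<theta>1)"
    using comparable_bounds[OF cu] by blast
  obtain c2 C2 R2 where c2: "c2 > 0" "C2 > 0" and
    b2: "\<And>x. norm x \<ge> R2 \<Longrightarrow> c2 * norm x powr (-\<theta>2) \<le> v x \<and> v x \<le> C2 * norm x powr (-\<theta>2)"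
    using comparable_bounds[OF cv] by blast
  have ge1: "\<theta>1 \<ge> Q"
  proof (rule ccontr)
    assume "\<not> \<theta>1 \<ge> Q"
    then have "\<theta>1 < q0 \<alpha> \<sigma>1 \<sigma>2 p q" by (simp add: Q_def)
    then show False using core[OF pars bu bv solu solv c1(1), of R1 \<theta>1] b1 by blast
  qed
  have ge2: "\<theta>2 \<ge> P"
  proof (rule ccontr)
    assume "\<not> \<theta>2 \<ge> P"
    then have th: "\<theta>2 < q0 \<alpha> \<sigma>2 \<sigma>1 q p" by (simp add: P_def p0_swap)
    have pq: "q * p > 1" using pars by (simp add: mult.commute)
    show False using core[OF pars(2) pars(1) pq pars(4,5,8,9,6,7) bv bu solv solu c2(1), of R2 \<theta>2] b2 th by blast
  qed
  have e1: "\<theta>2 = P" if "\<theta>1 = Q"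
  proof (rule ccontr)
    assume ne: "\<theta>2 \<noteq> P"
    have lu: "\<And>x. norm x \<ge> R1 \<Longrightarrow> u x \<ge> c1 * norm x powr (-Q)" using b1 that by simp
    obtain c' R' where c': "c' > 0" and l': "\<And>x. norm x \<ge> R' \<Longrightarrow> v x \<ge> c' * norm x powr (-(p * Q + \<sigma>2 - \<alpha>))"
      using transfer[of \<alpha> \<sigma>2 p c1 Q R1 u v] pars c1 Q0 lu solv by auto
    show False
    proof (rule decay_contra[of c' C2 P \<theta>2 "max R' R2" v])
      show "c' * norm x powr (-P) \<le> v x" if "norm x \<ge> max R' R2" for x using l'[of x] that idP by simp
      show "v x \<le> C2 * norm x powr (-\<theta>2)" if "norm x \<ge> max R' R2" for x using b2[of x] that by simp
    qed (use c' c2 ge2 ne in auto)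
  qed
  have e2: "\<theta>1 = Q" if "\<theta>2 = P"
  proof (rule ccontr)
    assume ne: "\<theta>1 \<noteq> Q"
    have lv: "\<And>x. norm x \<ge> R2 \<Longrightarrow> v x \<ge> c2 * norm x powr (-P)" using b2 that by simp
    obtain c' R' where c': "c' > 0" and l': "\<And>x. norm x \<ge> R' \<Longrightarrow> u x \<ge> c' * norm x powr (-(q * P + \<sigma>1 - \<alpha>))"
      using transfer[of \<alpha> \<sigma>1 q c2 P R2 v u] pars c2 P0 lv solu by auto
    show False
    proof (rule decay_contra[of c' C1 Q \<theta>1 "max R' R1" u])
      show "c' * norm x powr (-Q) \<le> u x" if "norm x \<ge> max R' R1" for x using l'[of x] that idQ by simp
      show "u x \<le> C1 * norm x powr (-\<theta>1)" if "norm x \<ge> max R' R1" for x using b1[of x] that by simp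
    qed (use c' c1 ge1 ne in auto)
  qed
  have both: "\<theta>1 = Q \<or> \<theta>2 = P"
  proof (rule ccontr)
    assume "\<not> (\<theta>1 = Q \<or> \<theta>2 = P)"
    then have g1: "\<theta>1 > Q" and g2: "\<theta>2 > P" using ge1 ge2 by auto
    have iu: "(\<integral>\<^sup>+x. ennreal (\<bar>u x\<bar> powr (real CARD('n) / Q)) \<partial>lborel) < \<infinity>"
      by (rule Lp_from_eventual[OF bu upos c1(2) Q0 g1, of R1]) (use b1 in blast)
    have iv: "(\<integral>\<^sup>+x. ennreal (\<bar>v x\<bar> powr (real CARD('n) / P)) \<partial>lborel) < \<infinity>"
      by (rule Lp_from_eventual[OF bv vpos c2(2) P0 g2, of R2]) (use b2 in blast)
    have "integrable_solution \<alpha> \<sigma>1 \<sigma>2 p q u v"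
      unfolding integrable_solution_def using iu iv by (simp add: Q_def P_def)
    then show False using nint by simp
  qed
  have "\<theta>1 = Q \<and> \<theta>2 = P" using both e1 e2 by blast
  then show ?thesis using cu cv by (simp add: Q_def P_def)
qed


theorem theorem1p5:
  fixes u v :: "real^'n \<Rightarrow> real" and p q \<alpha> \<sigma>1 \<sigma>2 :: real
  assumes "CARD('n) \<ge> 3"
    and "p > 0" and "q > 0" and "p * q > 1"
    and "0 < \<alpha>" and "\<alpha> < real CARD('n)"
    and "0 \<le> \<sigma>1" and "\<sigma>1 < \<alpha>" and "0 \<le> \<sigma>2" and "\<sigma>2 < \<alpha>"
    and "bounded (range u)" and "bounded (range v)"
    and "\<forall>x. u x > 0" and "\<forall>x. v x > 0"
    and "is_solution \<alpha> \<sigma>1 \<sigma>2 p q u v"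
  shows "(\<forall>\<theta>1 \<theta>2. \<theta>1 < q0 \<alpha> \<sigma>1 \<sigma>2 p q \<longrightarrow> \<theta>2 < p0 \<alpha> \<sigma>1 \<sigma>2 p q \<longrightarrow>
            \<not> (\<exists>c>0. (\<forall>x. u x \<ge> c * (1 + norm x) powr (-\<theta>1)) \<or>
                     (\<forall>x. v x \<ge> c * (1 + norm x) powr (-\<theta>2))))
       \<and> (\<not> integrable_solution \<alpha> \<sigma>1 \<sigma>2 p q u v \<longrightarrow>
          (\<forall>\<theta>3 \<theta>4. \<theta>3 > q0 \<alpha> \<sigma>1 \<sigma>2 p q \<longrightarrow> \<theta>4 > p0 \<alpha> \<sigma>1 \<sigma>2 p q \<longrightarrow>
            \<not> (\<exists>C>0. (\<forall>x. u x \<le> C * (1 + norm x) powr (-\<theta>3)) \<or>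
                     (\<forall>x. v x \<le> C * (1 + norm x) powr (-\<theta>4)))))
       \<and> (\<not> integrable_solution \<alpha> \<sigma>1 \<sigma>2 p q u v \<and> decaying_solution u v \<longrightarrow>
            asymp_comparable u (\<lambda>x. norm x powr (- q0 \<alpha> \<sigma>1 \<sigma>2 p q)) \<and>
            asymp_comparable v (\<lambda>x. norm x powr (- p0 \<alpha> \<sigma>1 \<sigma>2 p q)))"
proof -
  note pars = assms(2-10)
  have um: "u \<in> borel_measurable lborel" and vm: "v \<in> borel_measurable lborel"
    using assms(15) unfolding is_solution_def by auto
  have solu: "\<And>x. ennreal (u x) = Pot \<alpha> \<sigma>1 (\<lambda>y. v y powr q) x"
    using assms(15) unfolding is_solution_def by (simp add: Pot_def)
  have solv: "\<And>x. ennreal (v x) = Pot \<alpha> \<sigma>2 (\<lambda>y. u y powr p) x"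
    using assms(15) unfolding is_solution_def by (simp add: Pot_def)
  have upos: "\<And>x. u x > 0" and vpos: "\<And>x. v x > 0" using assms(13,14) by auto
  have pq: "q * p > 1" using assms(4) by (simp add: mult.commute)
  note parsw = pars(2) pars(1) pq pars(4,5,8,9,6,7)
  have I: "\<forall>\<theta>1 \<theta>2. \<theta>1 < q0 \<alpha> \<sigma>1 \<sigma>2 p q \<longrightarrow> \<theta>2 < p0 \<alpha> \<sigma>1 \<sigma>2 p q \<longrightarrow>
            \<not> (\<exists>c>0. (\<forall>x. u x \<ge> c * (1 + norm x) powr (-\<theta>1)) \<or>
                     (\<forall>x. v x \<ge> c * (1 + norm x) powr (-\<theta>2)))"
  proof (intro allI impI notI)
    fix \<theta>1 \<theta>2 :: real
    assume t1: "\<theta>1 < q0 \<alpha> \<sigma>1 \<sigma>2 p q" and t2: "\<theta>2 < p0 \<alpha> \<sigma>1 \<sigma>2 p q"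
      and ex: "\<exists>c>0. (\<forall>x. u x \<ge> c * (1 + norm x) powr (-\<theta>1)) \<or> (\<forall>x. v x \<ge> c * (1 + norm x) powr (-\<theta>2))"
    then obtain c where c: "c > 0" and d: "(\<forall>x. u x \<ge> c * (1 + norm x) powr (-\<theta>1)) \<or> (\<forall>x. v x \<ge> c * (1 + norm x) powr (-\<theta>2))"
      by blast
    from d show False
    proof
      assume "\<forall>x. u x \<ge> c * (1 + norm x) powr (-\<theta>1)"
      then show False using part_i_u[OF pars assms(11,12) solu solv t1 c] by blast
    next
      assume "\<forall>x. v x \<ge> c * (1 + norm x) powr (-\<theta>2)"
      moreover have t2': "\<theta>2 < q0 \<alpha> \<sigma>2 \<sigma>1 q p" using t2 by (simp add: p0_swap)
      ultimately show False using part_i_u[OF parsw assms(12,11) solv solu t2' c] by blast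
    qed
  qed
  have II: "\<not> integrable_solution \<alpha> \<sigma>1 \<sigma>2 p q u v \<longrightarrow>
          (\<forall>\<theta>3 \<theta>4. \<theta>3 > q0 \<alpha> \<sigma>1 \<sigma>2 p q \<longrightarrow> \<theta>4 > p0 \<alpha> \<sigma>1 \<sigma>2 p q \<longrightarrow>
            \<not> (\<exists>C>0. (\<forall>x. u x \<le> C * (1 + norm x) powr (-\<theta>3)) \<or>
                     (\<forall>x. v x \<le> C * (1 + norm x) powr (-\<theta>4))))"
  proof (intro allI impI notI)
    fix \<theta>3 \<theta>4 :: real
    assume nint: "\<not> integrable_solution \<alpha> \<sigma>1 \<sigma>2 p q u v"
      and t3: "\<theta>3 > q0 \<alpha> \<sigma>1 \<sigma>2 p q" and t4: "\<theta>4 > p0 \<alpha> \<sigma>1 \<sigma>2 p q"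
      and ex: "\<exists>C>0. (\<forall>x. u x \<le> C * (1 + norm x) powr (-\<theta>3)) \<or> (\<forall>x. v x \<le> C * (1 + norm x) powr (-\<theta>4))"
    then obtain C where C: "C > 0" and d: "(\<forall>x. u x \<le> C * (1 + norm x) powr (-\<theta>3)) \<or> (\<forall>x. v x \<le> C * (1 + norm x) powr (-\<theta>4))"
      by blast
    from d show False
    proof
      assume "\<forall>x. u x \<le> C * (1 + norm x) powr (-\<theta>3)"
      then show False using part_ii_u[OF pars assms(11,12) upos vpos um vm solu solv nint t3 C] by blast
    next
      assume "\<forall>x. v x \<le> C * (1 + norm x) powr (-\<theta>4)"
      moreover have t4': "\<theta>4 > q0 \<alpha> \<sigma>2 \<sigma>1 q p" using t4 by (simp add: p0_swap)
      moreover have nint': "\<not> integrable_solution \<alpha> \<sigma>2 \<sigma>1 q p v u" using nint by (simp add: int_swap)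
      ultimately show False using part_ii_u[OF parsw assms(12,11) vpos upos vm um solv solu nint' t4' C] by blast
    qed
  qed
  have III: "\<not> integrable_solution \<alpha> \<sigma>1 \<sigma>2 p q u v \<and> decaying_solution u v \<longrightarrow>
            asymp_comparable u (\<lambda>x. norm x powr (- q0 \<alpha> \<sigma>1 \<sigma>2 p q)) \<and>
            asymp_comparable v (\<lambda>x. norm x powr (- p0 \<alpha> \<sigma>1 \<sigma>2 p q))"
    using part_iii[OF pars assms(11,12) upos vpos solu solv] by blast
  show ?thesis using I II III by blast
qed

end
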